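(* Let $m\ge1$ and, for each $i\in[m]$, observe $X_{ij}=\mu_{xi}+\epsilon_{xij}$, $j\in[n_{xi}]$, and $Y_{ij}=\mu_{yi}+\epsilon_{yij}$, $j\in[n_{yi}]$, with $\mathbb{E}\epsilon_{xij}=\mathbb{E}\epsilon_{yij}=0$, unknown constants $\mu_{xi},\mu_{yi}$, and $n_{xi}\ge4$, $n_{yi}\ge4$. Let $\mathcal{H}_0=\{i:\mu_{xi}=\mu_{yi}\}$, $\mathbf{X}_i=(X_{ij}:j\in[n_{xi}])$, $\mathbf{Y}_i=(Y_{ij}:j\in[n_{yi}])$ and $\mathbf{K}_{-i}=(\mathbf{X}_k,\mathbf{Y}_k:k\ne i)$. Assume that for every $i\in\mathcal{H}_0$: conditional on $\mathbf{K}_{-i}$, $\{\epsilon_{xij}\}_j$ is independent of $\{\epsilon_{yij}\}_j$; conditional on $\mathbf{K}_{-i}$, $\{\epsilon_{xij}\}_j$ are i.i.d. and $\{\epsilon_{yij}\}_j$ are i.i.d.; and their conditional densities satisfy $f^{\epsilon}_{xi}(-x\mid\mathbf{K}_{-i})=f^{\epsilon}_{xi}(x\mid\mathbf{K}_{-i})$ and $f^{\epsilon}_{yi}(-y\mid\mathbf{K}_{-i})=f^{\epsilon}_{yi}(y\mid\mathbf{K}_{-i})$. Construct $(T_i,T_i^0)$ as follows. Randomly (independently of the data) partition $[n_{xi}]$ into $\mathcal{N}_{xi1},\mathcal{N}_{xi2}$ of sizes $n_{xi1}=\lceil n_{xi}/2\rceil$, $n_{xi2}=n_{xi}-n_{xi1}$,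 and $[n_{yi}]$ into $\mathcal{N}_{yi1},\mathcal{N}_{yi2}$ of sizes $n_{yi1}=\lceil n_{yi}/2\rceil$, $n_{yi2}=n_{yi}-n_{yi1}$. For $k=1,2$ let $\bar X_{ik},\bar Y_{ik}$ be the sample means and $S^2_{xik},S^2_{yik}$ the sample variances (divisor size minus one) over $\mathcal{N}_{xik}$, $\mathcal{N}_{yik}$. Let $S^2_{xi}=\frac{(n_{xi1}-1)S^2_{xi1}+(n_{xi2}-1)S^2_{xi2}}{n_{xi}-2}$, $S^2_{yi}=\frac{(n_{yi1}-1)S^2_{yi1}+(n_{yi2}-1)S^2_{yi2}}{n_{yi}-2}$, $V_i=(\bar X_{i1}-\bar Y_{i1})+(\bar X_{i2}-\bar Y_{i2})$, $V_i^0=(\bar X_{i1}-\bar Y_{i1})-(\bar X_{i2}-\bar Y_{i2})$, $S_i=\sqrt{\frac{n_{xi}}{n_{xi1}n_{xi2}}S^2_{xi}+\frac{n_{yi}}{n_{yi1}n_{yi2}}S^2_{yi}}$, and $T_i=\Phi^{-1}\{G_{t,n_{xi}+n_{yi}-4}(V_i/S_i)\}$, $T_i^0=\Phi^{-1}\{G_{t,n_{xi}+n_{yi}-4}(V_i^0/S_i)\}$. Then for every $i\in\mathcal{H}_0$, $$(T_i,T_i^0\mid \mathbf{T}_{-i},\mathbf{T}^0_{-i})\stackrel{d}{=}(T_i^0,T_i\mid \mathbf{T}_{-i},\mathbf{T}^0_{-i}),$$ where $\mathbf{T}_{-i}=(T_k:k\ne i)$ and $\mathbf{T}^0_{-i}=(T^0_k:k\ne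 i)$.
   Context: $\Phi$ is the standard normal CDF and $G_{t,\nu}$ the CDF of the $t$-distribution with $\nu$ degrees of freedom. *)

theory Defs
  imports "HOL-Probability.Probability"
begin

definition Phi :: "real \<Rightarrow> real" where
  "Phi x = (LBINT t:{..x}. std_normal_density t)"

definition Phi_inv :: "real \<Rightarrow> real" where
  "Phi_inv p = (THE x. Phi x = p)"

definition t_density :: "real \<Rightarrow> real \<Rightarrow> real" where
  "t_density nu x = Gamma ((nu + 1) / 2) / (sqrt (nu * pi) * Gamma (nu / 2))
      * (1 + x\<^sup>2 / nu) powr (- (nu + 1) / 2)"

definition t_cdf :: "real \<Rightarrow> real \<Rightarrow> real" where
  "t_cdf nu x = (LBINT t:{..x}. t_density nu t)"

definition smean :: "nat set \<Rightarrow> (nat \<Rightarrow> real) \<Rightarrow> real" where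
  "smean A f = (\<Sum>j\<in>A. f j) / real (card A)"

definition svar :: "nat set \<Rightarrow> (nat \<Rightarrow> real) \<Rightarrow> real" where
  "svar A f = (\<Sum>j\<in>A. (f j - smean A f)\<^sup>2) / (real (card A) - 1)"

text \<open>Split statistics. Arguments: sample sizes nx, ny; first halves Nx1 \<subseteq> {..<nx},
  Ny1 \<subseteq> {..<ny} (the second halves are the complements); sample vectors x, y.\<close>
definition V_stat :: "nat \<Rightarrow> nat \<Rightarrow> nat set \<Rightarrow> nat set \<Rightarrow> (nat \<Rightarrow> real) \<Rightarrow> (nat \<Rightarrow> real) \<Rightarrow> real" where
  "V_stat nx ny Nx1 Ny1 x y =
     (smean Nx1 x - smean Ny1 y) + (smean ({..<nx} - Nx1) x - smean ({..<ny} - Ny1) y)"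

definition V0_stat :: "nat \<Rightarrow> nat \<Rightarrow> nat set \<Rightarrow> nat set \<Rightarrow> (nat \<Rightarrow> real) \<Rightarrow> (nat \<Rightarrow> real) \<Rightarrow> real" where
  "V0_stat nx ny Nx1 Ny1 x y =
     (smean Nx1 x - smean Ny1 y) - (smean ({..<nx} - Nx1) x - smean ({..<ny} - Ny1) y)"

definition S_stat :: "nat \<Rightarrow> nat \<Rightarrow> nat set \<Rightarrow> nat set \<Rightarrow> (nat \<Rightarrow> real) \<Rightarrow> (nat \<Rightarrow> real) \<Rightarrow> real" where
  "S_stat nx ny Nx1 Ny1 x y =
     (let Nx2 = {..<nx} - Nx1; Ny2 = {..<ny} - Ny1;
          nx1 = real (card Nx1); nx2 = real (card Nx2);
          ny1 = real (card Ny1); ny2 = real (card Ny2);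
          S2x = ((nx1 - 1) * svar Nx1 x + (nx2 - 1) * svar Nx2 x) / (real nx - 2);
          S2y = ((ny1 - 1) * svar Ny1 y + (ny2 - 1) * svar Ny2 y) / (real ny - 2)
      in sqrt (real nx / (nx1 * nx2) * S2x + real ny / (ny1 * ny2) * S2y))"

definition T_stat :: "nat \<Rightarrow> nat \<Rightarrow> nat set \<Rightarrow> nat set \<Rightarrow> (nat \<Rightarrow> real) \<Rightarrow> (nat \<Rightarrow> real) \<Rightarrow> real" where
  "T_stat nx ny Nx1 Ny1 x y =
     Phi_inv (t_cdf (real nx + real ny - 4) (V_stat nx ny Nx1 Ny1 x y / S_stat nx ny Nx1 Ny1 x y))"

definition T0_stat :: "nat \<Rightarrow> nat \<Rightarrow> nat set \<Rightarrow> nat set \<Rightarrow> (nat \<Rightarrow> real) \<Rightarrow> (nat \<Rightarrow> real) \<Rightarrow> real" where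
  "T0_stat nx ny Nx1 Ny1 x y =
     Phi_inv (t_cdf (real nx + real ny - 4) (V0_stat nx ny Nx1 Ny1 x y / S_stat nx ny Nx1 Ny1 x y))"

definition valid_partitions :: "nat \<Rightarrow> (nat \<Rightarrow> nat) \<Rightarrow> (nat \<Rightarrow> nat) \<Rightarrow> (nat \<Rightarrow> nat set \<times> nat set) set" where
  "valid_partitions m nx ny = {p. \<forall>k.
      (k < m \<longrightarrow> fst (p k) \<subseteq> {..<nx k} \<and> card (fst (p k)) = nat \<lceil>real (nx k) / 2\<rceil>
                 \<and> snd (p k) \<subseteq> {..<ny k} \<and> card (snd (p k)) = nat \<lceil>real (ny k) / 2\<rceil>)
    \<and> (m \<le> k \<longrightarrow> p k = ({}, {}))}"

definition group_space :: "(nat \<Rightarrow> nat) \<Rightarrow> (nat \<Rightarrow> nat) \<Rightarrow> nat \<Rightarrow> ((nat \<Rightarrow> real) \<times> (nat \<Rightarrow> real)) measure" where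
  "group_space nx ny k = PiM {..<nx k} (\<lambda>_. borel) \<Otimes>\<^sub>M PiM {..<ny k} (\<lambda>_. borel)"

end

theory Submission
  imports Defs
begin

lemma Phi_cdf: "Phi x = cdf (density lborel std_normal_density) x"
proof -
  have "Phi x = integral\<^sup>L lborel (\<lambda>t. std_normal_density t *\<^sub>R indicator {..x} t)"
    unfolding Phi_def set_lebesgue_integral_def by (simp add: mult.commute)
  also have "\<dots> = integral\<^sup>L (density lborel std_normal_density) (indicator {..x})"
    by (subst integral_density) (auto simp: normal_density_nonneg)
  also have "\<dots> = cdf (density lborel std_normal_density) x"
    by (simp add: cdf_def)
  finally show ?thesis .
qed

lemma real_distribution_N: "real_distribution (density lborel std_normal_density)"
  using prob_space_normal_density by (auto simp: real_distribution_def real_distribution_axioms_def)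

lemma Phi_cont: "isCont Phi x"
proof -
  interpret real_distribution "density lborel std_normal_density" by (rule real_distribution_N)
  have "AE t in lborel. t \<notin> {x}" by (intro AE_not_in) (simp add: null_sets_def)
  then have "AE t in lborel. t \<in> {x} \<longrightarrow> std_normal_density t = 0" by eventually_elim simp
  then have "{x} \<in> null_sets (density lborel std_normal_density)"
    by (subst null_sets_density_iff) auto
  then have "isCont (cdf (density lborel std_normal_density)) x"
    by (subst isCont_cdf) (simp add: measure_eq_0_null_sets)
  then show ?thesis unfolding Phi_cdf[abs_def] .
qed

lemma std_pos: "std_normal_density t > 0"
  by (simp add: normal_density_pos)

lemma Phi_strict: "x < y \<Longrightarrow> Phi x < Phi y"
proof -
  assume xy: "x < y"
  interpret real_distribution "density lborel std_normal_density" by (rule real_distribution_N)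
  have "{x<..y} \<notin> null_sets (density lborel std_normal_density)"
  proof
    assume "{x<..y} \<in> null_sets (density lborel std_normal_density)"
    then have "AE t in lborel. t \<in> {x<..y} \<longrightarrow> std_normal_density t = 0"
      by (subst (asm) null_sets_density_iff) auto
    then have "AE t in lborel. t \<notin> {x<..y}"
      by eventually_elim (metis std_pos less_irrefl)
    then have "{x<..y} \<in> null_sets lborel"
      using AE_iff_null_sets[of "{x<..y}" lborel] by simp
    then show False using xy by (simp add: null_sets_def)
  qed
  then have "measure (density lborel std_normal_density) {x<..y} > 0"
  proof -
    have S: "{x<..y} \<in> sets (density lborel std_normal_density)" by simp
    show ?thesis
      using emeasure_eq_measure[of "{x<..y}"] measure_nonneg[of "density lborel std_normal_density" "{x<..y}"] S \<open>{x<..y} \<notin> _\<close>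
      by (metis ennreal_0 null_setsI order_le_imp_less_or_eq)
  qed
  then show ?thesis using cdf_diff_eq[OF xy] unfolding Phi_cdf by simp
qed

lemma Phi_inv_Phi: "Phi_inv (Phi x) = x"
  unfolding Phi_inv_def
  by (rule the_equality) (auto, metis Phi_strict linorder_neqE_linordered_idom less_irrefl)

lemma Phi_inv_meas: "Phi_inv \<in> borel_measurable borel"
proof -
  define S where "S = range Phi"
  have cont: "continuous_on UNIV Phi"
    by (simp add: Phi_cont continuous_at_imp_continuous_on)
  have "connected S" unfolding S_def
    by (rule connected_continuous_image[OF cont]) simp
  then have Sb: "S \<in> sets borel"
    by (intro real_interval_borel_measurable) (simp add: is_interval_connected_1)
  have m1: "mono_on S Phi_inv"
  proof (rule mono_onI)
    fix p q assume "p \<in> S" "q \<in> S" "p \<le> q"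
    then obtain a b where ab: "p = Phi a" "q = Phi b" by (auto simp: S_def)
    have "a \<le> b" using \<open>p \<le> q\<close> ab Phi_strict[of b a] by (cases "a \<le> b") auto
    then show "Phi_inv p \<le> Phi_inv q" using ab by (simp add: Phi_inv_Phi)
  qed
  have "Phi_inv p = (THE x::real. False)" if "p \<notin> S" for p
  proof -
    have "(\<lambda>x. Phi x = p) = (\<lambda>x. False)" using that by (auto simp: S_def)
    then show ?thesis unfolding Phi_inv_def by simp
  qed
  then have m2: "mono_on (- S) Phi_inv"
    by (intro mono_onI) simp
  show ?thesis
    by (rule borel_measurable_piecewise_mono[of "{S, - S}"]) (use Sb m1 m2 in auto)
qed

lemma Phi_inv_meas'[measurable]: "f \<in> borel_measurable M \<Longrightarrow> (\<lambda>x. Phi_inv (f x)) \<in> borel_measurable M"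
  using measurable_compose[OF _ Phi_inv_meas] by blast

lemma t_cdf_meas: "t_cdf nu \<in> borel_measurable borel"
proof -
  have "(\<lambda>x. \<integral>t. indicator {..x} t *\<^sub>R t_density nu t \<partial>lborel) \<in> borel_measurable borel"
  proof (rule lborel.borel_measurable_lebesgue_integral)
    have *: "case_prod (\<lambda>x t. indicator {..x} t *\<^sub>R t_density nu t)
       = (\<lambda>z. (if snd z \<le> fst z then 1 else 0) * t_density nu (snd z))"
      by (auto simp: fun_eq_iff indicator_def)
    show "case_prod (\<lambda>x t. indicator {..x} t *\<^sub>R t_density nu t) \<in> borel_measurable (borel \<Otimes>\<^sub>M lborel)"
    proof -
      have td: "t_density nu \<in> borel_measurable borel"
        unfolding t_density_def[abs_def] by measurable
      note td[measurable]
      have "(\<lambda>z::real\<times>real. (if snd z \<le> fst z then 1 else 0) * t_density nu (snd z)) \<in> borel_measurable (borel \<Otimes>\<^sub>M borel)"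
        by measurable
      then show ?thesis unfolding * by (simp add: measurable_cong_sets[OF sets_pair_measure_cong[OF refl sets_lborel] refl])
    qed
  qed
  then show ?thesis unfolding t_cdf_def[abs_def] set_lebesgue_integral_def .
qed

lemma t_cdf_meas'[measurable]: "f \<in> borel_measurable M \<Longrightarrow> (\<lambda>x. t_cdf nu (f x)) \<in> borel_measurable M"
  using measurable_compose[OF _ t_cdf_meas] by blast

lemma smean_meas:
  assumes "A \<subseteq> {..<n}" "\<And>j. j < n \<Longrightarrow> (\<lambda>\<omega>. f \<omega> j) \<in> borel_measurable N"
  shows "(\<lambda>\<omega>. smean A (f \<omega>)) \<in> borel_measurable N"
  unfolding smean_def using assms by (intro borel_measurable_divide borel_measurable_sum) auto

lemma svar_meas:
  assumes "A \<subseteq> {..<n}" "\<And>j. j < n \<Longrightarrow> (\<lambda>\<omega>. f \<omega> j) \<in> borel_measurable N"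
  shows "(\<lambda>\<omega>. svar A (f \<omega>)) \<in> borel_measurable N"
  unfolding svar_def using assms smean_meas[OF assms]
  by (intro borel_measurable_divide borel_measurable_sum borel_measurable_power borel_measurable_diff) auto

context
  fixes nx ny :: nat and Nx1 Ny1 :: "nat set" and x y :: "'b \<Rightarrow> nat \<Rightarrow> real" and N :: "'b measure"
  assumes sx: "Nx1 \<subseteq> {..<nx}" and sy: "Ny1 \<subseteq> {..<ny}"
    and mx: "\<And>j. j < nx \<Longrightarrow> (\<lambda>\<omega>. x \<omega> j) \<in> borel_measurable N"
    and my: "\<And>j. j < ny \<Longrightarrow> (\<lambda>\<omega>. y \<omega> j) \<in> borel_measurable N"
begin

lemma stat_meas_aux[measurable]:
  "(\<lambda>\<omega>. smean Nx1 (x \<omega>)) \<in> borel_measurable N"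
  "(\<lambda>\<omega>. smean ({..<nx} - Nx1) (x \<omega>)) \<in> borel_measurable N"
  "(\<lambda>\<omega>. smean Ny1 (y \<omega>)) \<in> borel_measurable N"
  "(\<lambda>\<omega>. smean ({..<ny} - Ny1) (y \<omega>)) \<in> borel_measurable N"
  "(\<lambda>\<omega>. svar Nx1 (x \<omega>)) \<in> borel_measurable N"
  "(\<lambda>\<omega>. svar ({..<nx} - Nx1) (x \<omega>)) \<in> borel_measurable N"
  "(\<lambda>\<omega>. svar Ny1 (y \<omega>)) \<in> borel_measurable N"
  "(\<lambda>\<omega>. svar ({..<ny} - Ny1) (y \<omega>)) \<in> borel_measurable N"
  apply (rule smean_meas[of _ nx]; use sx mx in auto)
  apply (rule smean_meas[of _ nx]; use sx mx in auto)
  apply (rule smean_meas[of _ ny]; use sy my in auto)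
  apply (rule smean_meas[of _ ny]; use sy my in auto)
  apply (rule svar_meas[of _ nx]; use sx mx in auto)
  apply (rule svar_meas[of _ nx]; use sx mx in auto)
  apply (rule svar_meas[of _ ny]; use sy my in auto)
  apply (rule svar_meas[of _ ny]; use sy my in auto)
  done

lemma T_stat_meas:
  "(\<lambda>\<omega>. T_stat nx ny Nx1 Ny1 (x \<omega>) (y \<omega>)) \<in> borel_measurable N"
  "(\<lambda>\<omega>. T0_stat nx ny Nx1 Ny1 (x \<omega>) (y \<omega>)) \<in> borel_measurable N"
  unfolding T_stat_def T0_stat_def V_stat_def V0_stat_def S_stat_def Let_def by measurable

end

lemma smean_cong: "(\<And>j. j \<in> A \<Longrightarrow> x' j = x j) \<Longrightarrow> smean A x' = smean A x"
  unfolding smean_def by simp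

lemma svar_cong: "(\<And>j. j \<in> A \<Longrightarrow> x' j = x j) \<Longrightarrow> svar A x' = svar A x"
  unfolding svar_def using smean_cong[of A x' x] by simp

lemma smean_neg:
  assumes "finite A" "card A \<noteq> 0" "\<And>j. j \<in> A \<Longrightarrow> x' j = c - x j"
  shows "smean A x' = c - smean A x"
proof -
  have "(\<Sum>j\<in>A. x' j) = real (card A) * c - (\<Sum>j\<in>A. x j)"
    using assms by (simp add: sum_subtractf)
  then show ?thesis using assms(2) unfolding smean_def by (simp add: field_simps)
qed

lemma svar_neg:
  assumes "finite A" "card A \<noteq> 0" "\<And>j. j \<in> A \<Longrightarrow> x' j = c - x j"
  shows "svar A x' = svar A x"
proof -
  have m: "smean A x' = c - smean A x" by (rule smean_neg[OF assms])
  have "(\<Sum>j\<in>A. (x' j - smean A x')\<^sup>2) = (\<Sum>j\<in>A. (x j - smean A x)\<^sup>2)"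
    by (rule sum.cong) (simp_all add: assms(3) m power2_eq_square algebra_simps)
  then show ?thesis unfolding svar_def by simp
qed

lemma T_stat_cong:
  assumes "Nx1 \<subseteq> {..<nx}" "Ny1 \<subseteq> {..<ny}" "\<And>j. j < nx \<Longrightarrow> x' j = x j" "\<And>j. j < ny \<Longrightarrow> y' j = y j"
  shows "T_stat nx ny Nx1 Ny1 x' y' = T_stat nx ny Nx1 Ny1 x y"
    "T0_stat nx ny Nx1 Ny1 x' y' = T0_stat nx ny Nx1 Ny1 x y"
proof -
  have a: "smean Nx1 x' = smean Nx1 x" "svar Nx1 x' = svar Nx1 x"
    "smean ({..<nx} - Nx1) x' = smean ({..<nx} - Nx1) x" "svar ({..<nx} - Nx1) x' = svar ({..<nx} - Nx1) x"
    using assms by (auto intro!: smean_cong svar_cong)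
  have b: "smean Ny1 y' = smean Ny1 y" "svar Ny1 y' = svar Ny1 y"
    "smean ({..<ny} - Ny1) y' = smean ({..<ny} - Ny1) y" "svar ({..<ny} - Ny1) y' = svar ({..<ny} - Ny1) y"
    using assms by (auto intro!: smean_cong svar_cong)
  show "T_stat nx ny Nx1 Ny1 x' y' = T_stat nx ny Nx1 Ny1 x y"
    "T0_stat nx ny Nx1 Ny1 x' y' = T0_stat nx ny Nx1 Ny1 x y"
    unfolding T_stat_def T0_stat_def V_stat_def V0_stat_def S_stat_def a b Let_def by simp_all
qed

lemma T_stat_flip:
  assumes "Nx1 \<subseteq> {..<nx}" "Ny1 \<subseteq> {..<ny}"
    and "card Nx1 \<noteq> 0" "card ({..<nx} - Nx1) \<noteq> 0" "card Ny1 \<noteq> 0" "card ({..<ny} - Ny1) \<noteq> 0"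
    and "\<And>j. j \<in> Nx1 \<Longrightarrow> x' j = x j" "\<And>j. j \<in> {..<nx} - Nx1 \<Longrightarrow> x' j = c - x j"
    and "\<And>j. j \<in> Ny1 \<Longrightarrow> y' j = y j" "\<And>j. j \<in> {..<ny} - Ny1 \<Longrightarrow> y' j = c - y j"
  shows "T_stat nx ny Nx1 Ny1 x' y' = T0_stat nx ny Nx1 Ny1 x y"
    "T0_stat nx ny Nx1 Ny1 x' y' = T_stat nx ny Nx1 Ny1 x y"
proof -
  have fin: "finite Nx1" "finite Ny1" using assms(1,2) finite_subset by auto
  have a: "smean Nx1 x' = smean Nx1 x" "svar Nx1 x' = svar Nx1 x"
    "smean Ny1 y' = smean Ny1 y" "svar Ny1 y' = svar Ny1 y"
    using assms by (auto intro!: smean_cong svar_cong)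
  have b: "smean ({..<nx} - Nx1) x' = c - smean ({..<nx} - Nx1) x" "svar ({..<nx} - Nx1) x' = svar ({..<nx} - Nx1) x"
    "smean ({..<ny} - Ny1) y' = c - smean ({..<ny} - Ny1) y" "svar ({..<ny} - Ny1) y' = svar ({..<ny} - Ny1) y"
    using smean_neg[OF _ assms(4), of x' c x] svar_neg[OF _ assms(4), of x' c x]
      smean_neg[OF _ assms(6), of y' c y] svar_neg[OF _ assms(6), of y' c y] assms(8,10) by auto
  show "T_stat nx ny Nx1 Ny1 x' y' = T0_stat nx ny Nx1 Ny1 x y"
    "T0_stat nx ny Nx1 Ny1 x' y' = T_stat nx ny Nx1 Ny1 x y"
    unfolding T_stat_def T0_stat_def V_stat_def V0_stat_def S_stat_def a b Let_def by (simp_all add: algebra_simps)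
qed

definition flipv :: "nat set \<Rightarrow> nat set \<Rightarrow> (nat \<Rightarrow> real) \<Rightarrow> (nat \<Rightarrow> real)" where
  "flipv I F a = (\<lambda>j\<in>I. if j \<in> F then - a j else a j)"

lemma flipv_meas[measurable]: "flipv I F \<in> PiM I (\<lambda>_. M) \<rightarrow>\<^sub>M PiM I (\<lambda>_. M)"
  if "(uminus :: real \<Rightarrow> real) \<in> M \<rightarrow>\<^sub>M M"
  unfolding flipv_def using that
  by (intro measurable_restrict) (auto intro!: measurable_If measurable_compose[OF measurable_component_singleton])

lemma flipv_meas_borel[measurable]: "flipv I F \<in> PiM I (\<lambda>_. borel) \<rightarrow>\<^sub>M PiM I (\<lambda>_. borel)"
  by (rule flipv_meas) simp

lemma flipv_meas_lborel: "flipv I F \<in> PiM I (\<lambda>_. lborel) \<rightarrow>\<^sub>M PiM I (\<lambda>_. lborel)"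
  by (rule flipv_meas) simp

lemma prod_sf_lborel: "product_sigma_finite (\<lambda>_. lborel :: real measure)"
  by (simp add: product_sigma_finite_def lborel.sigma_finite_measure_axioms)

lemma lborel_uminus_vimage: "A \<in> sets borel \<Longrightarrow> emeasure lborel (uminus -` (A::real set)) = emeasure lborel A"
proof -
  assume "A \<in> sets borel"
  then have "emeasure (distr lborel borel uminus) A = emeasure lborel (uminus -` A \<inter> space lborel)"
    by (intro emeasure_distr) auto
  then show ?thesis using lborel_distr_uminus by simp
qed

lemma flip_PiM_lborel:
  assumes "finite I"
  shows "distr (PiM I (\<lambda>_. lborel)) (PiM I (\<lambda>_. lborel)) (flipv I F) = PiM I (\<lambda>_. lborel :: real measure)"
proof -
  interpret product_sigma_finite "\<lambda>_. lborel :: real measure" by (rule prod_sf_lborel)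
  show ?thesis
  proof (rule PiM_eqI[OF assms])
    show "sets (distr (PiM I (\<lambda>_. lborel)) (PiM I (\<lambda>_. lborel)) (flipv I F)) = sets (PiM I (\<lambda>_. lborel))" by simp
  next
    fix A assume A: "\<And>i. i \<in> I \<Longrightarrow> A i \<in> sets (lborel :: real measure)"
    have PA: "Pi\<^sub>E I A \<in> sets (PiM I (\<lambda>_. lborel))" using A by (intro sets_PiM_I_finite assms) auto
    have eqs: "flipv I F -` Pi\<^sub>E I A \<inter> space (PiM I (\<lambda>_. lborel)) = Pi\<^sub>E I (\<lambda>j. if j \<in> F then uminus -` A j else A j)"
      by (auto simp: flipv_def space_PiM PiE_def Pi_def extensional_def split: if_splits)
    have "emeasure (distr (PiM I (\<lambda>_. lborel)) (PiM I (\<lambda>_. lborel)) (flipv I F)) (Pi\<^sub>E I A)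
       = emeasure (PiM I (\<lambda>_. lborel)) (Pi\<^sub>E I (\<lambda>j. if j \<in> F then uminus -` A j else A j))"
      using PA by (simp add: emeasure_distr flipv_meas_lborel eqs)
    also have "\<dots> = (\<Prod>j\<in>I. emeasure lborel (if j \<in> F then uminus -` A j else A j))"
    proof (intro emeasure_PiM[OF assms])
      fix j assume "j \<in> I"
      have "uminus -` A j \<in> sets borel"
        using A[OF \<open>j \<in> I\<close>] by (intro measurable_sets_borel[of "uminus::real\<Rightarrow>real"]) auto
      then show "(if j \<in> F then uminus -` A j else A j) \<in> sets lborel" using A[OF \<open>j \<in> I\<close>] by simp
    qed
    also have "\<dots> = (\<Prod>j\<in>I. emeasure lborel (A j))"
      using A by (intro prod.cong refl) (auto simp: lborel_uminus_vimage)
    finally show "emeasure (distr (PiM I (\<lambda>_. lborel)) (PiM I (\<lambda>_. lborel)) (flipv I F)) (Pi\<^sub>E I A)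
       = (\<Prod>j\<in>I. emeasure lborel (A j))" .
  qed
qed

lemma flip_integral:
  fixes f :: "real \<Rightarrow> real"
  assumes I: "finite I" and f: "f \<in> borel_measurable borel" and sym: "\<And>x. f (- x) = f x"
    and A: "A \<in> sets (PiM I (\<lambda>_. borel :: real measure))"
  shows "(\<integral>\<^sup>+ a \<in> flipv I F -` A \<inter> space (PiM I (\<lambda>_. borel :: real measure)). (\<Prod>j\<in>I. ennreal (f (a j))) \<partial>PiM I (\<lambda>_. lborel))
       = (\<integral>\<^sup>+ a \<in> A. (\<Prod>j\<in>I. ennreal (f (a j))) \<partial>PiM I (\<lambda>_. lborel))"
proof -
  let ?P = "PiM I (\<lambda>_. lborel :: real measure)"
  define g where "g a = (\<Prod>j\<in>I. ennreal (f (a j))) * indicator A a" for a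
  have A': "A \<in> sets ?P" using A by (simp add: sets_PiM_cong[OF refl sets_lborel])
  have gm: "g \<in> borel_measurable ?P"
    using A' f unfolding g_def by measurable
  have "(\<integral>\<^sup>+ a \<in> A. (\<Prod>j\<in>I. ennreal (f (a j))) \<partial>?P) = (\<integral>\<^sup>+ a. g a \<partial>distr ?P ?P (flipv I F))"
    by (simp add: flip_PiM_lborel[OF I] g_def)
  also have "\<dots> = (\<integral>\<^sup>+ a. g (flipv I F a) \<partial>?P)"
    by (rule nn_integral_distr[OF flipv_meas_lborel]) (simp add: gm)
  also have "\<dots> = (\<integral>\<^sup>+ a \<in> flipv I F -` A \<inter> space (PiM I (\<lambda>_. borel :: real measure)). (\<Prod>j\<in>I. ennreal (f (a j))) \<partial>?P)"
  proof (rule nn_integral_cong)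
    fix a assume a: "a \<in> space ?P"
    have "(\<Prod>j\<in>I. ennreal (f (flipv I F a j))) = (\<Prod>j\<in>I. ennreal (f (a j)))"
      by (rule prod.cong) (auto simp: flipv_def sym)
    moreover have "indicator A (flipv I F a) = (indicator (flipv I F -` A \<inter> space (PiM I (\<lambda>_. borel :: real measure))) a :: ennreal)"
      using a by (auto simp: indicator_def space_PiM)
    ultimately show "g (flipv I F a) = (\<Prod>j\<in>I. ennreal (f (a j))) * indicator (flipv I F -` A \<inter> space (PiM I (\<lambda>_. borel :: real measure))) a"
      unfolding g_def by simp
  qed
  finally show ?thesis by simp
qed

lemma sets_triple:
  "sets (M1 \<Otimes>\<^sub>M (M2 \<Otimes>\<^sub>M M3)) = sigma_sets (space M1 \<times> (space M2 \<times> space M3))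
     {C \<times> (A \<times> B) | C A B. C \<in> sets M1 \<and> A \<in> sets M2 \<and> B \<in> sets M3}"
  (is "_ = sigma_sets ?O ?E")
proof
  have E: "?E \<subseteq> Pow ?O"
  proof
    fix X assume "X \<in> ?E"
    then obtain C A B where X: "X = C \<times> (A \<times> B)" "C \<in> sets M1" "A \<in> sets M2" "B \<in> sets M3" by blast
    then have "C \<subseteq> space M1" "A \<subseteq> space M2" "B \<subseteq> space M3" by (simp_all add: sets.sets_into_space)
    then show "X \<in> Pow ?O" unfolding X(1) by blast
  qed
  interpret S: sigma_algebra ?O "sigma_sets ?O ?E" by (rule sigma_algebra_sigma_sets[OF E])
  have sp: "space M1 \<times> e \<in> sigma_sets ?O ?E" if "e \<in> sigma_sets (space M2 \<times> space M3) {a \<times> b | a b. a \<in> sets M2 \<and> b \<in> sets M3}" for e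
    using that
  proof induct
    case (Basic a)
    then obtain a1 b1 where ab: "a = a1 \<times> b1" "a1 \<in> sets M2" "b1 \<in> sets M3" by blast
    have "space M1 \<times> a \<in> ?E" unfolding ab(1)
      by (rule CollectI, rule exI[of _ "space M1"], rule exI[of _ a1], rule exI[of _ b1]) (simp add: ab)
    then show ?case by (rule sigma_sets.Basic)
  next
    case Empty then show ?case by (simp add: sigma_sets.Empty)
  next
    case (Compl a)
    have eq: "space M1 \<times> (space M2 \<times> space M3 - a) = ?O - space M1 \<times> a" by (rule set_eqI) (simp add: mem_Times_iff, blast)
    show ?case unfolding eq by (rule sigma_sets.Compl[OF Compl(2)])
  next
    case (Union a)
    have eq: "space M1 \<times> (\<Union>i. a i) = (\<Union>i. space M1 \<times> a i)" by (rule set_eqI) (simp add: mem_Times_iff)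
    show ?case unfolding eq by (rule sigma_sets.Union) (rule Union(2))
  qed
  show "sets (M1 \<Otimes>\<^sub>M (M2 \<Otimes>\<^sub>M M3)) \<subseteq> sigma_sets ?O ?E"
  proof -
    have "sets (M1 \<Otimes>\<^sub>M (M2 \<Otimes>\<^sub>M M3)) = sigma_sets ?O {c \<times> e | c e. c \<in> sets M1 \<and> e \<in> sets (M2 \<Otimes>\<^sub>M M3)}"
      by (rule sets_pair_measure[of M1 "M2 \<Otimes>\<^sub>M M3", unfolded space_pair_measure])
    also have "\<dots> \<subseteq> sigma_sets ?O ?E"
    proof (rule S.sigma_sets_subset)
      show "{c \<times> e | c e. c \<in> sets M1 \<and> e \<in> sets (M2 \<Otimes>\<^sub>M M3)} \<subseteq> sigma_sets ?O ?E"
      proof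
        fix X assume "X \<in> {c \<times> e | c e. c \<in> sets M1 \<and> e \<in> sets (M2 \<Otimes>\<^sub>M M3)}"
        then obtain c e where X: "X = c \<times> e" and c: "c \<in> sets M1" and e: "e \<in> sets (M2 \<Otimes>\<^sub>M M3)" by blast
        have cs: "c \<subseteq> space M1" using c by (rule sets.sets_into_space)
        have es: "e \<subseteq> space M2 \<times> space M3" using sets.sets_into_space[OF e] by (simp add: space_pair_measure)
        have eq: "c \<times> e = (c \<times> (space M2 \<times> space M3)) \<inter> (space M1 \<times> e)"
          by (simp add: Times_Int_Times Int_absorb1 Int_absorb2 cs es)
        have 1: "c \<times> (space M2 \<times> space M3) \<in> sigma_sets ?O ?E"
        proof (rule sigma_sets.Basic)
          show "c \<times> (space M2 \<times> space M3) \<in> ?E"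
            by (rule CollectI, rule exI[of _ c], rule exI[of _ "space M2"], rule exI[of _ "space M3"]) (simp add: c)
        qed
        have 2: "space M1 \<times> e \<in> sigma_sets ?O ?E"
          using e by (intro sp) (simp add: sets_pair_measure)
        show "X \<in> sigma_sets ?O ?E" unfolding X eq by (rule S.Int[OF 1 2])
      qed
    qed
    finally show ?thesis .
  qed
next
  show "sigma_sets ?O ?E \<subseteq> sets (M1 \<Otimes>\<^sub>M (M2 \<Otimes>\<^sub>M M3))"
  proof (rule sets.sigma_sets_subset')
    show "?E \<subseteq> sets (M1 \<Otimes>\<^sub>M (M2 \<Otimes>\<^sub>M M3))"
    proof
      fix X assume "X \<in> ?E"
      then obtain C A B where X: "X = C \<times> (A \<times> B)" "C \<in> sets M1" "A \<in> sets M2" "B \<in> sets M3" by blast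
      then show "X \<in> sets (M1 \<Otimes>\<^sub>M (M2 \<Otimes>\<^sub>M M3))" by simp
    qed
    show "?O \<in> sets (M1 \<Otimes>\<^sub>M (M2 \<Otimes>\<^sub>M M3))"
      by (metis sets.top space_pair_measure)
  qed
qed

lemma Int_stable_triple:
  "Int_stable {C \<times> (A \<times> B) | C A B. C \<in> sets M1 \<and> A \<in> sets M2 \<and> B \<in> sets M3}"
proof (rule Int_stableI)
  fix X Y assume "X \<in> {C \<times> (A \<times> B) | C A B. C \<in> sets M1 \<and> A \<in> sets M2 \<and> B \<in> sets M3}"
    "Y \<in> {C \<times> (A \<times> B) | C A B. C \<in> sets M1 \<and> A \<in> sets M2 \<and> B \<in> sets M3}"
  then obtain C A B C' A' B' where X: "X = C \<times> (A \<times> B)" "C \<in> sets M1" "A \<in> sets M2" "B \<in> sets M3"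
    and Y: "Y = C' \<times> (A' \<times> B')" "C' \<in> sets M1" "A' \<in> sets M2" "B' \<in> sets M3" by blast
  have "X \<inter> Y = (C \<inter> C') \<times> ((A \<inter> A') \<times> (B \<inter> B'))" unfolding X(1) Y(1) by (simp add: Times_Int_Times)
  moreover have "C \<inter> C' \<in> sets M1" "A \<inter> A' \<in> sets M2" "B \<inter> B' \<in> sets M3" using X Y by auto
  ultimately show "X \<inter> Y \<in> {C \<times> (A \<times> B) | C A B. C \<in> sets M1 \<and> A \<in> sets M2 \<and> B \<in> sets M3}"
    by (intro CollectI exI[of _ "C \<inter> C'"] exI[of _ "A \<inter> A'"] exI[of _ "B \<inter> B'"]) simp
qed

lemma flip_invariance:
  fixes M :: "'a measure" and KS :: "'k measure" and K :: "'a \<Rightarrow> 'k" and ex ey :: "'a \<Rightarrow> nat \<Rightarrow> real"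
    and fx fy :: "'k \<Rightarrow> real \<Rightarrow> real" and nx ny :: nat
  assumes P: "prob_space M"
    and Km: "K \<in> M \<rightarrow>\<^sub>M KS"
    and exm: "ex \<in> M \<rightarrow>\<^sub>M PiM {..<nx} (\<lambda>_. borel)" and eym: "ey \<in> M \<rightarrow>\<^sub>M PiM {..<ny} (\<lambda>_. borel)"
    and fxm: "(\<lambda>(\<kappa>, x). fx \<kappa> x) \<in> borel_measurable (KS \<Otimes>\<^sub>M borel)"
    and fym: "(\<lambda>(\<kappa>, x). fy \<kappa> x) \<in> borel_measurable (KS \<Otimes>\<^sub>M borel)"
    and symx: "\<forall>\<kappa> x. fx \<kappa> (- x) = fx \<kappa> x" and symy: "\<forall>\<kappa> x. fy \<kappa> (- x) = fy \<kappa> x"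
    and eq: "\<forall>C\<in>sets KS. \<forall>A\<in>sets (PiM {..<nx} (\<lambda>_. borel :: real measure)). \<forall>B\<in>sets (PiM {..<ny} (\<lambda>_. borel :: real measure)).
        emeasure M {\<omega>\<in>space M. K \<omega> \<in> C \<and> ex \<omega> \<in> A \<and> ey \<omega> \<in> B}
        = (\<integral>\<^sup>+\<kappa>\<in>C. (\<integral>\<^sup>+a\<in>A. (\<Prod>j<nx. ennreal (fx \<kappa> (a j))) \<partial>PiM {..<nx} (\<lambda>_. lborel))
                 * (\<integral>\<^sup>+b\<in>B. (\<Prod>j<ny. ennreal (fy \<kappa> (b j))) \<partial>PiM {..<ny} (\<lambda>_. lborel)) \<partial>distr M KS K)"
  shows "distr M (KS \<Otimes>\<^sub>M (PiM {..<nx} (\<lambda>_. borel) \<Otimes>\<^sub>M PiM {..<ny} (\<lambda>_. borel)))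
            (\<lambda>\<omega>. (K \<omega>, (flipv {..<nx} Fx (ex \<omega>), flipv {..<ny} Fy (ey \<omega>))))
       = distr M (KS \<Otimes>\<^sub>M (PiM {..<nx} (\<lambda>_. borel) \<Otimes>\<^sub>M PiM {..<ny} (\<lambda>_. borel))) (\<lambda>\<omega>. (K \<omega>, (ex \<omega>, ey \<omega>)))"
    (is "distr M ?O ?Zf = distr M ?O ?Z")
proof -
  let ?AX = "PiM {..<nx} (\<lambda>_. borel :: real measure)" and ?AY = "PiM {..<ny} (\<lambda>_. borel :: real measure)"
  let ?E = "{C \<times> (A \<times> B) | C A B. C \<in> sets KS \<and> A \<in> sets ?AX \<and> B \<in> sets ?AY}"
  let ?Om = "space KS \<times> (space ?AX \<times> space ?AY)"
  interpret prob_space M by (rule P)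
  have Zm: "?Z \<in> M \<rightarrow>\<^sub>M ?O" using Km exm eym by (intro measurable_Pair) auto
  have Zfm: "?Zf \<in> M \<rightarrow>\<^sub>M ?O" using Km exm eym
    by (intro measurable_Pair measurable_compose[OF _ flipv_meas_borel]) auto
  have fxk: "(\<lambda>x. fx \<kappa> x) \<in> borel_measurable borel" if "\<kappa> \<in> space KS" for \<kappa>
    using measurable_compose[OF measurable_Pair1'[OF that] fxm] by simp
  have fyk: "(\<lambda>x. fy \<kappa> x) \<in> borel_measurable borel" if "\<kappa> \<in> space KS" for \<kappa>
    using measurable_compose[OF measurable_Pair1'[OF that] fym] by simp
  have eqi: "\<And>C A B. C \<in> sets KS \<Longrightarrow> A \<in> sets ?AX \<Longrightarrow> B \<in> sets ?AY \<Longrightarrow>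
        emeasure M {\<omega>\<in>space M. K \<omega> \<in> C \<and> ex \<omega> \<in> A \<and> ey \<omega> \<in> B}
        = (\<integral>\<^sup>+\<kappa>\<in>C. (\<integral>\<^sup>+a\<in>A. (\<Prod>j<nx. ennreal (fx \<kappa> (a j))) \<partial>PiM {..<nx} (\<lambda>_. lborel))
                 * (\<integral>\<^sup>+b\<in>B. (\<Prod>j<ny. ennreal (fy \<kappa> (b j))) \<partial>PiM {..<ny} (\<lambda>_. lborel)) \<partial>distr M KS K)"
    using eq by blast
  have key: "emeasure (distr M ?O ?Zf) X = emeasure (distr M ?O ?Z) X" if X: "X \<in> ?E" for X
  proof -
    obtain C A B where XC: "X = C \<times> (A \<times> B)" and C: "C \<in> sets KS" and A: "A \<in> sets ?AX" and B: "B \<in> sets ?AY"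
      using X by blast
    have Xs: "X \<in> sets ?O" unfolding XC using C A B by simp
    define A' where "A' = flipv {..<nx} Fx -` A \<inter> space ?AX"
    define B' where "B' = flipv {..<ny} Fy -` B \<inter> space ?AY"
    have A': "A' \<in> sets ?AX" unfolding A'_def by (rule measurable_sets[OF flipv_meas_borel A])
    have B': "B' \<in> sets ?AY" unfolding B'_def by (rule measurable_sets[OF flipv_meas_borel B])
    have s1: "?Zf -` X \<inter> space M = {\<omega>\<in>space M. K \<omega> \<in> C \<and> ex \<omega> \<in> A' \<and> ey \<omega> \<in> B'}"
    proof (rule set_eqI)
      fix \<omega>
      show "\<omega> \<in> ?Zf -` X \<inter> space M \<longleftrightarrow> \<omega> \<in> {\<omega>\<in>space M. K \<omega> \<in> C \<and> ex \<omega> \<in> A' \<and> ey \<omega> \<in> B'}"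
        using measurable_space[OF exm, of \<omega>] measurable_space[OF eym, of \<omega>]
        unfolding XC A'_def B'_def by (simp add: mem_Times_iff) blast
    qed
    have s2: "?Z -` X \<inter> space M = {\<omega>\<in>space M. K \<omega> \<in> C \<and> ex \<omega> \<in> A \<and> ey \<omega> \<in> B}"
      unfolding XC by (rule set_eqI) (simp add: mem_Times_iff, blast)
    have "emeasure (distr M ?O ?Zf) X = emeasure M {\<omega>\<in>space M. K \<omega> \<in> C \<and> ex \<omega> \<in> A' \<and> ey \<omega> \<in> B'}"
      by (simp add: emeasure_distr[OF Zfm Xs] s1)
    also have "\<dots> = (\<integral>\<^sup>+\<kappa>\<in>C. (\<integral>\<^sup>+a\<in>A'. (\<Prod>j<nx. ennreal (fx \<kappa> (a j))) \<partial>PiM {..<nx} (\<lambda>_. lborel))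
                 * (\<integral>\<^sup>+b\<in>B'. (\<Prod>j<ny. ennreal (fy \<kappa> (b j))) \<partial>PiM {..<ny} (\<lambda>_. lborel)) \<partial>distr M KS K)"
      by (rule eqi[OF C A' B'])
    also have "\<dots> = (\<integral>\<^sup>+\<kappa>\<in>C. (\<integral>\<^sup>+a\<in>A. (\<Prod>j<nx. ennreal (fx \<kappa> (a j))) \<partial>PiM {..<nx} (\<lambda>_. lborel))
                 * (\<integral>\<^sup>+b\<in>B. (\<Prod>j<ny. ennreal (fy \<kappa> (b j))) \<partial>PiM {..<ny} (\<lambda>_. lborel)) \<partial>distr M KS K)"
    proof (rule nn_integral_cong)
      fix \<kappa> assume "\<kappa> \<in> space (distr M KS K)"
      then have k: "\<kappa> \<in> space KS" by simp
      have "(\<integral>\<^sup>+a\<in>A'. (\<Prod>j<nx. ennreal (fx \<kappa> (a j))) \<partial>PiM {..<nx} (\<lambda>_. lborel))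
          = (\<integral>\<^sup>+a\<in>A. (\<Prod>j<nx. ennreal (fx \<kappa> (a j))) \<partial>PiM {..<nx} (\<lambda>_. lborel))"
        unfolding A'_def by (rule flip_integral[OF _ fxk[OF k] _ A]) (use symx in auto)
      moreover have "(\<integral>\<^sup>+b\<in>B'. (\<Prod>j<ny. ennreal (fy \<kappa> (b j))) \<partial>PiM {..<ny} (\<lambda>_. lborel))
          = (\<integral>\<^sup>+b\<in>B. (\<Prod>j<ny. ennreal (fy \<kappa> (b j))) \<partial>PiM {..<ny} (\<lambda>_. lborel))"
        unfolding B'_def by (rule flip_integral[OF _ fyk[OF k] _ B]) (use symy in auto)
      ultimately show "(\<integral>\<^sup>+a\<in>A'. (\<Prod>j<nx. ennreal (fx \<kappa> (a j))) \<partial>PiM {..<nx} (\<lambda>_. lborel))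
                 * (\<integral>\<^sup>+b\<in>B'. (\<Prod>j<ny. ennreal (fy \<kappa> (b j))) \<partial>PiM {..<ny} (\<lambda>_. lborel)) * indicator C \<kappa>
          = (\<integral>\<^sup>+a\<in>A. (\<Prod>j<nx. ennreal (fx \<kappa> (a j))) \<partial>PiM {..<nx} (\<lambda>_. lborel))
                 * (\<integral>\<^sup>+b\<in>B. (\<Prod>j<ny. ennreal (fy \<kappa> (b j))) \<partial>PiM {..<ny} (\<lambda>_. lborel)) * indicator C \<kappa>"
        by simp
    qed
    also have "\<dots> = emeasure M {\<omega>\<in>space M. K \<omega> \<in> C \<and> ex \<omega> \<in> A \<and> ey \<omega> \<in> B}"
      by (rule eqi[OF C A B, symmetric])
    also have "\<dots> = emeasure (distr M ?O ?Z) X"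
      by (simp add: emeasure_distr[OF Zm Xs] s2)
    finally show ?thesis .
  qed
  show ?thesis
  proof (rule measure_eqI_generator_eq[OF Int_stable_triple, where \<Omega>="?Om" and A="\<lambda>_. ?Om"])
    show "?E \<subseteq> Pow ?Om"
    proof
      fix X assume "X \<in> ?E"
      then obtain C A B where X: "X = C \<times> (A \<times> B)" "C \<in> sets KS" "A \<in> sets ?AX" "B \<in> sets ?AY" by blast
      then have "C \<subseteq> space KS" "A \<subseteq> space ?AX" "B \<subseteq> space ?AY" by (simp_all add: sets.sets_into_space)
      then show "X \<in> Pow ?Om" unfolding X(1) by blast
    qed
    show "\<And>X. X \<in> ?E \<Longrightarrow> emeasure (distr M ?O ?Zf) X = emeasure (distr M ?O ?Z) X" by (rule key)
    show "sets (distr M ?O ?Zf) = sigma_sets ?Om ?E" by (simp add: sets_triple)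
    show "sets (distr M ?O ?Z) = sigma_sets ?Om ?E" by (simp add: sets_triple)
    show "range (\<lambda>_. ?Om) \<subseteq> ?E"
    proof -
      have "?Om \<in> ?E" by (intro CollectI exI[of _ "space KS"] exI[of _ "space ?AX"] exI[of _ "space ?AY"]) simp
      then show ?thesis by blast
    qed
    show "(\<Union>i::nat. ?Om) = ?Om" by simp
    show "\<And>i::nat. emeasure (distr M ?O ?Zf) ?Om \<noteq> \<infinity>"
      by (simp add: emeasure_distr[OF Zfm] space_pair_measure[symmetric] del: space_pair_measure)
  qed
qed

lemma card_half:
  assumes n: "n \<ge> 4" and S: "S \<subseteq> {..<n}" and c: "card S = nat \<lceil>real n / 2\<rceil>"
  shows "card S \<noteq> 0" "card ({..<n} - S) \<noteq> 0"
proof -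
  have fin: "finite S" using S finite_subset by blast
  have "real n / 2 \<le> of_int (int n - 1)" using n by simp
  then have u: "\<lceil>real n / 2\<rceil> \<le> int n - 1" by (rule ceiling_le)
  have l: "\<lceil>real n / 2\<rceil> \<ge> 1" using n by (simp add: le_ceiling_iff)
  show "card S \<noteq> 0" using l c by simp
  have "card ({..<n} - S) = n - card S" using S fin by (simp add: card_Diff_subset)
  then show "card ({..<n} - S) \<noteq> 0" using u c n by simp
qed

lemma finite_VP: "finite (valid_partitions m nx ny)"
proof -
  let ?V = "valid_partitions m nx ny"
  have inj: "inj_on (\<lambda>p. restrict p {..<m}) ?V"
  proof (rule inj_onI)
    fix p q assume p: "p \<in> ?V" and q: "q \<in> ?V" and eq: "restrict p {..<m} = restrict q {..<m}"
    show "p = q"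
    proof
      fix k show "p k = q k"
      proof (cases "k < m")
        case True then show ?thesis using fun_cong[OF eq, of k] by simp
      next
        case False then show ?thesis using p q by (simp add: valid_partitions_def)
      qed
    qed
  qed
  have sub: "(\<lambda>p. restrict p {..<m}) ` ?V \<subseteq> PiE {..<m} (\<lambda>k. Pow {..<nx k} \<times> Pow {..<ny k})"
  proof
    fix r assume "r \<in> (\<lambda>p. restrict p {..<m}) ` ?V"
    then obtain p where p: "p \<in> ?V" and r: "r = restrict p {..<m}" by blast
    have "p k \<in> Pow {..<nx k} \<times> Pow {..<ny k}" if "k < m" for k
    proof -
      have "fst (p k) \<subseteq> {..<nx k}" "snd (p k) \<subseteq> {..<ny k}" using p that unfolding valid_partitions_def by auto
      then show ?thesis by (simp add: mem_Times_iff)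
    qed
    then show "r \<in> PiE {..<m} (\<lambda>k. Pow {..<nx k} \<times> Pow {..<ny k})" unfolding r by (simp add: restrict_PiE_iff)
  qed
  have "finite (PiE {..<m} (\<lambda>k. Pow {..<nx k} \<times> Pow {..<ny k}))"
    by (intro finite_PiE finite_cartesian_product) simp_all
  then have "finite ((\<lambda>p. restrict p {..<m}) ` ?V)" using sub finite_subset by blast
  then show ?thesis using inj finite_imageD by blast
qed

lemma measure_split_finite:
  assumes P: "prob_space M" and fin: "finite V" and inV: "\<And>\<omega>. \<omega> \<in> space M \<Longrightarrow> Part \<omega> \<in> V"
    and ms: "\<And>p. p \<in> V \<Longrightarrow> {\<omega> \<in> space M. Part \<omega> = p \<and> Q p \<omega>} \<in> sets M"
  shows "measure M {\<omega> \<in> space M. Q (Part \<omega>) \<omega>} = (\<Sum>p\<in>V. measure M {\<omega> \<in> space M. Part \<omega> = p \<and> Q p \<omega>})"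
proof -
  interpret prob_space M by (rule P)
  have e1: "{\<omega> \<in> space M. Q (Part \<omega>) \<omega>} = (\<Union>p\<in>V. {\<omega> \<in> space M. Part \<omega> = p \<and> Q p \<omega>})"
    using inV by auto
  have e2: "measure M (\<Union>p\<in>V. {\<omega> \<in> space M. Part \<omega> = p \<and> Q p \<omega>}) = (\<Sum>p\<in>V. measure M {\<omega> \<in> space M. Part \<omega> = p \<and> Q p \<omega>})"
  proof (rule finite_measure_finite_Union[OF fin])
    show "(\<lambda>p. {\<omega> \<in> space M. Part \<omega> = p \<and> Q p \<omega>}) ` V \<subseteq> sets M" using ms by blast
    show "disjoint_family_on (\<lambda>p. {\<omega> \<in> space M. Part \<omega> = p \<and> Q p \<omega>}) V"
      unfolding disjoint_family_on_def by blast
  qed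
  show ?thesis unfolding e1 by (rule e2)
qed

lemma comp_meas_pi:
  "j \<in> I \<Longrightarrow> f \<in> N \<rightarrow>\<^sub>M PiM I (\<lambda>_. borel) \<Longrightarrow> (\<lambda>z. c + f z j :: real) \<in> borel_measurable N"
proof -
  assume j: "j \<in> I" and f: "f \<in> N \<rightarrow>\<^sub>M PiM I (\<lambda>_. borel)"
  have "(\<lambda>z. f z j) \<in> borel_measurable N"
    by (rule measurable_compose[OF f measurable_component_singleton[OF j]])
  then show "(\<lambda>z. c + f z j :: real) \<in> borel_measurable N" by simp
qed

type_synonym zty = "(nat \<Rightarrow> (nat \<Rightarrow> real) \<times> (nat \<Rightarrow> real)) \<times> ((nat \<Rightarrow> real) \<times> (nat \<Rightarrow> real))"
type_synonym pty = "nat \<Rightarrow> nat set \<times> nat set"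

theorem theorem2:
  fixes M :: "'a measure" and m :: nat and nx ny :: "nat \<Rightarrow> nat"
    and mux muy :: "nat \<Rightarrow> real"
    and ex ey :: "nat \<Rightarrow> nat \<Rightarrow> 'a \<Rightarrow> real"
    and Part :: "'a \<Rightarrow> nat \<Rightarrow> nat set \<times> nat set"
    and X Y :: "nat \<Rightarrow> nat \<Rightarrow> 'a \<Rightarrow> real"
    and Kminus :: "nat \<Rightarrow> 'a \<Rightarrow> nat \<Rightarrow> (nat \<Rightarrow> real) \<times> (nat \<Rightarrow> real)"
    and T T0 :: "nat \<Rightarrow> 'a \<Rightarrow> real"
  assumes prob: "prob_space M"
    and m_pos: "m \<ge> 1"
    and nx_ge: "\<forall>k<m. nx k \<ge> 4" and ny_ge: "\<forall>k<m. ny k \<ge> 4"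
    and meas_x: "\<forall>k<m. \<forall>j<nx k. ex k j \<in> borel_measurable M"
    and meas_y: "\<forall>k<m. \<forall>j<ny k. ey k j \<in> borel_measurable M"
    and mean0_x: "\<forall>k<m. \<forall>j<nx k. integrable M (ex k j) \<and> (\<integral>\<omega>. ex k j \<omega> \<partial>M) = 0"
    and mean0_y: "\<forall>k<m. \<forall>j<ny k. integrable M (ey k j) \<and> (\<integral>\<omega>. ey k j \<omega> \<partial>M) = 0"
    and X_def: "X \<equiv> \<lambda>k j \<omega>. mux k + ex k j \<omega>"
    and Y_def: "Y \<equiv> \<lambda>k j \<omega>. muy k + ey k j \<omega>"
    and K_def: "Kminus \<equiv> \<lambda>i \<omega>. (\<lambda>k\<in>{..<m} - {i}.
                   ((\<lambda>j\<in>{..<nx k}. X k j \<omega>), (\<lambda>j\<in>{..<ny k}. Y k j \<omega>)))"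
    \<comment> \<open>conditional structure of the errors of each null group given K_{-i}\<close>
    and cond_null: "\<forall>i<m. mux i = muy i \<longrightarrow>
       (\<exists>fx fy :: (nat \<Rightarrow> (nat \<Rightarrow> real) \<times> (nat \<Rightarrow> real)) \<Rightarrow> real \<Rightarrow> real.
          (\<lambda>(\<kappa>, x). fx \<kappa> x) \<in> borel_measurable (PiM ({..<m} - {i}) (group_space nx ny) \<Otimes>\<^sub>M borel)
        \<and> (\<lambda>(\<kappa>, y). fy \<kappa> y) \<in> borel_measurable (PiM ({..<m} - {i}) (group_space nx ny) \<Otimes>\<^sub>M borel)
        \<and> (\<forall>\<kappa> x. fx \<kappa> x \<ge> 0 \<and> fy \<kappa> x \<ge> 0)
        \<and> (\<forall>\<kappa>. (\<integral>\<^sup>+ x. ennreal (fx \<kappa> x) \<partial>lborel) = 1 \<and> (\<integral>\<^sup>+ y. ennreal (fy \<kappa> y) \<partial>lborel) = 1)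
        \<and> (\<forall>\<kappa> x. fx \<kappa> (- x) = fx \<kappa> x \<and> fy \<kappa> (- x) = fy \<kappa> x)
        \<and> (\<forall>C \<in> sets (PiM ({..<m} - {i}) (group_space nx ny)).
           \<forall>A \<in> sets (PiM {..<nx i} (\<lambda>_. borel :: real measure)).
           \<forall>B \<in> sets (PiM {..<ny i} (\<lambda>_. borel :: real measure)).
             emeasure M {\<omega> \<in> space M. Kminus i \<omega> \<in> C
                  \<and> (\<lambda>j\<in>{..<nx i}. ex i j \<omega>) \<in> A \<and> (\<lambda>j\<in>{..<ny i}. ey i j \<omega>) \<in> B}
             = (\<integral>\<^sup>+ \<kappa> \<in> C.
                  (\<integral>\<^sup>+ a \<in> A. (\<Prod>j<nx i. ennreal (fx \<kappa> (a j))) \<partial>PiM {..<nx i} (\<lambda>_. lborel))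
                * (\<integral>\<^sup>+ b \<in> B. (\<Prod>j<ny i. ennreal (fy \<kappa> (b j))) \<partial>PiM {..<ny i} (\<lambda>_. lborel))
                \<partial>distr M (PiM ({..<m} - {i}) (group_space nx ny)) (Kminus i))))"
    \<comment> \<open>random partitions, independent of the data\<close>
    and part_valid: "\<forall>\<omega>\<in>space M. Part \<omega> \<in> valid_partitions m nx ny"
    and part_meas: "\<forall>p. {\<omega> \<in> space M. Part \<omega> = p} \<in> sets M"
    and part_indep: "\<forall>p. \<forall>E \<in> sets (PiM {..<m} (\<lambda>k. PiM {..<nx k} (\<lambda>_. borel :: real measure) \<Otimes>\<^sub>M PiM {..<ny k} (\<lambda>_. borel :: real measure))).
        measure M {\<omega> \<in> space M. Part \<omega> = p \<and>
            (\<lambda>k\<in>{..<m}. ((\<lambda>j\<in>{..<nx k}. ex k j \<omega>), (\<lambda>j\<in>{..<ny k}. ey k j \<omega>))) \<in> E}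
        = measure M {\<omega> \<in> space M. Part \<omega> = p}
          * measure M {\<omega> \<in> space M. (\<lambda>k\<in>{..<m}. ((\<lambda>j\<in>{..<nx k}. ex k j \<omega>), (\<lambda>j\<in>{..<ny k}. ey k j \<omega>))) \<in> E}"
    and T_def: "T \<equiv> \<lambda>k \<omega>. T_stat (nx k) (ny k) (fst (Part \<omega> k)) (snd (Part \<omega> k)) (\<lambda>j. X k j \<omega>) (\<lambda>j. Y k j \<omega>)"
    and T0_def: "T0 \<equiv> \<lambda>k \<omega>. T0_stat (nx k) (ny k) (fst (Part \<omega> k)) (snd (Part \<omega> k)) (\<lambda>j. X k j \<omega>) (\<lambda>j. Y k j \<omega>)"
  shows "\<forall>i<m. mux i = muy i \<longrightarrow>
     (\<forall>A \<in> sets (borel :: (real \<times> real) measure).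
      \<forall>B \<in> sets (PiM ({..<m} - {i}) (\<lambda>_. borel :: (real \<times> real) measure)).
        measure M {\<omega> \<in> space M. (T i \<omega>, T0 i \<omega>) \<in> A \<and> (\<lambda>k\<in>{..<m} - {i}. (T k \<omega>, T0 k \<omega>)) \<in> B}
      = measure M {\<omega> \<in> space M. (T0 i \<omega>, T i \<omega>) \<in> A \<and> (\<lambda>k\<in>{..<m} - {i}. (T k \<omega>, T0 k \<omega>)) \<in> B})"
proof -
  interpret prob_space M by (rule prob)
  show ?thesis
  proof (intro allI impI ballI)
    fix i A B
    assume i: "i < m" and null: "mux i = muy i"
      and A: "A \<in> sets (borel :: (real \<times> real) measure)"
      and B: "B \<in> sets (PiM ({..<m} - {i}) (\<lambda>_. borel :: (real \<times> real) measure))"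
    let ?I = "{..<m} - {i}"
    let ?KS = "PiM ?I (group_space nx ny)"
    let ?AX = "PiM {..<nx i} (\<lambda>_. borel :: real measure)"
    let ?AY = "PiM {..<ny i} (\<lambda>_. borel :: real measure)"
    let ?O = "?KS \<Otimes>\<^sub>M (?AX \<Otimes>\<^sub>M ?AY)"
    let ?WS = "PiM {..<m} (\<lambda>k. PiM {..<nx k} (\<lambda>_. borel :: real measure) \<Otimes>\<^sub>M PiM {..<ny k} (\<lambda>_. borel :: real measure))"
    define VP where "VP = valid_partitions m nx ny"
    define Z where "Z = (\<lambda>\<omega>. (Kminus i \<omega>, ((\<lambda>j\<in>{..<nx i}. ex i j \<omega>), (\<lambda>j\<in>{..<ny i}. ey i j \<omega>))))"
    define W where "W = (\<lambda>\<omega>. (\<lambda>k\<in>{..<m}. ((\<lambda>j\<in>{..<nx k}. ex k j \<omega>), (\<lambda>j\<in>{..<ny k}. ey k j \<omega>))))"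
    define h where "h = (\<lambda>w. ((\<lambda>k\<in>?I. ((\<lambda>j\<in>{..<nx k}. mux k + fst (w k) j), (\<lambda>j\<in>{..<ny k}. muy k + snd (w k) j))),
                              (fst (w i), snd (w i))))"
    define Ti :: "pty \<Rightarrow> zty \<Rightarrow> real" where "Ti = (\<lambda>p z. T_stat (nx i) (ny i) (fst (p i)) (snd (p i)) (\<lambda>j. mux i + fst (snd z) j) (\<lambda>j. muy i + snd (snd z) j))"
    define T0i :: "pty \<Rightarrow> zty \<Rightarrow> real" where "T0i = (\<lambda>p z. T0_stat (nx i) (ny i) (fst (p i)) (snd (p i)) (\<lambda>j. mux i + fst (snd z) j) (\<lambda>j. muy i + snd (snd z) j))"
    define tt :: "pty \<Rightarrow> zty \<Rightarrow> nat \<Rightarrow> real \<times> real" where "tt = (\<lambda>p z. \<lambda>k\<in>?I. (T_stat (nx k) (ny k) (fst (p k)) (snd (p k)) (fst (fst z k)) (snd (fst z k)),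
                                          T0_stat (nx k) (ny k) (fst (p k)) (snd (p k)) (fst (fst z k)) (snd (fst z k))))"
    define G where "G = (\<lambda>p. {z \<in> space ?O. (Ti p z, T0i p z) \<in> A \<and> tt p z \<in> B})"
    define G' where "G' = (\<lambda>p. {z \<in> space ?O. (T0i p z, Ti p z) \<in> A \<and> tt p z \<in> B})"
    define phi :: "pty \<Rightarrow> zty \<Rightarrow> zty" where "phi = (\<lambda>p z. (fst z, (flipv {..<nx i} ({..<nx i} - fst (p i)) (fst (snd z)),
                                          flipv {..<ny i} ({..<ny i} - snd (p i)) (snd (snd z)))))"

    have im: "i \<in> {..<m}" using i by simp
    have VPsub: "fst (p k) \<subseteq> {..<nx k}" "snd (p k) \<subseteq> {..<ny k}" if "p \<in> VP" "k < m" for p k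
      using that unfolding VP_def valid_partitions_def by auto
    have VPcard: "card (fst (p k)) = nat \<lceil>real (nx k) / 2\<rceil>" "card (snd (p k)) = nat \<lceil>real (ny k) / 2\<rceil>"
      if "p \<in> VP" "k < m" for p k
      using that unfolding VP_def valid_partitions_def by auto
    have PartVP: "Part \<omega> \<in> VP" if "\<omega> \<in> space M" for \<omega>
      using part_valid that unfolding VP_def by blast

    have exm: "(\<lambda>\<omega>. \<lambda>j\<in>{..<nx i}. ex i j \<omega>) \<in> M \<rightarrow>\<^sub>M ?AX"
    proof (rule measurable_restrict)
      fix j assume "j \<in> {..<nx i}"
      then show "ex i j \<in> borel_measurable M" using meas_x i by simp
    qed
    have eym: "(\<lambda>\<omega>. \<lambda>j\<in>{..<ny i}. ey i j \<omega>) \<in> M \<rightarrow>\<^sub>M ?AY"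
    proof (rule measurable_restrict)
      fix j assume "j \<in> {..<ny i}"
      then show "ey i j \<in> borel_measurable M" using meas_y i by simp
    qed
    have Km: "Kminus i \<in> M \<rightarrow>\<^sub>M ?KS"
    proof -
      have "(\<lambda>\<omega>. \<lambda>k\<in>?I. ((\<lambda>j\<in>{..<nx k}. mux k + ex k j \<omega>), (\<lambda>j\<in>{..<ny k}. muy k + ey k j \<omega>))) \<in> M \<rightarrow>\<^sub>M ?KS"
      proof (rule measurable_restrict)
        fix k assume k: "k \<in> ?I"
        then have km: "k < m" by simp
        show "(\<lambda>\<omega>. ((\<lambda>j\<in>{..<nx k}. mux k + ex k j \<omega>), (\<lambda>j\<in>{..<ny k}. muy k + ey k j \<omega>))) \<in> M \<rightarrow>\<^sub>M group_space nx ny k"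
          unfolding group_space_def
        proof (rule measurable_Pair)
          show "(\<lambda>\<omega>. \<lambda>j\<in>{..<nx k}. mux k + ex k j \<omega>) \<in> M \<rightarrow>\<^sub>M PiM {..<nx k} (\<lambda>_. borel)"
          proof (rule measurable_restrict)
            fix j assume "j \<in> {..<nx k}"
            then have "ex k j \<in> borel_measurable M" using meas_x km by simp
            then show "(\<lambda>\<omega>. mux k + ex k j \<omega>) \<in> borel_measurable M" by simp
          qed
          show "(\<lambda>\<omega>. \<lambda>j\<in>{..<ny k}. muy k + ey k j \<omega>) \<in> M \<rightarrow>\<^sub>M PiM {..<ny k} (\<lambda>_. borel)"
          proof (rule measurable_restrict)
            fix j assume "j \<in> {..<ny k}"
            then have "ey k j \<in> borel_measurable M" using meas_y km by simp
            then show "(\<lambda>\<omega>. muy k + ey k j \<omega>) \<in> borel_measurable M" by simp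
          qed
        qed
      qed
      then show ?thesis unfolding K_def X_def Y_def by simp
    qed
    have Zm: "Z \<in> M \<rightarrow>\<^sub>M ?O"
      unfolding Z_def by (intro measurable_Pair Km exm eym)
    have Zsp: "Z \<omega> \<in> space ?O" if "\<omega> \<in> space M" for \<omega>
      by (rule measurable_space[OF Zm that])
    obtain fx fy :: "(nat \<Rightarrow> (nat \<Rightarrow> real) \<times> (nat \<Rightarrow> real)) \<Rightarrow> real \<Rightarrow> real" where
      fxm: "(\<lambda>(\<kappa>, x). fx \<kappa> x) \<in> borel_measurable (?KS \<Otimes>\<^sub>M borel)"
      and fym: "(\<lambda>(\<kappa>, y). fy \<kappa> y) \<in> borel_measurable (?KS \<Otimes>\<^sub>M borel)"
      and sym: "\<forall>\<kappa> x. fx \<kappa> (- x) = fx \<kappa> x \<and> fy \<kappa> (- x) = fy \<kappa> x"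
      and eqC: "\<forall>C \<in> sets ?KS. \<forall>A \<in> sets ?AX. \<forall>B \<in> sets ?AY.
             emeasure M {\<omega> \<in> space M. Kminus i \<omega> \<in> C
                  \<and> (\<lambda>j\<in>{..<nx i}. ex i j \<omega>) \<in> A \<and> (\<lambda>j\<in>{..<ny i}. ey i j \<omega>) \<in> B}
             = (\<integral>\<^sup>+ \<kappa> \<in> C.
                  (\<integral>\<^sup>+ a \<in> A. (\<Prod>j<nx i. ennreal (fx \<kappa> (a j))) \<partial>PiM {..<nx i} (\<lambda>_. lborel))
                * (\<integral>\<^sup>+ b \<in> B. (\<Prod>j<ny i. ennreal (fy \<kappa> (b j))) \<partial>PiM {..<ny i} (\<lambda>_. lborel))
                \<partial>distr M ?KS (Kminus i))"
      using cond_null i null by blast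
    have symx: "\<forall>\<kappa> x. fx \<kappa> (- x) = fx \<kappa> x" and symy: "\<forall>\<kappa> x. fy \<kappa> (- x) = fy \<kappa> x" using sym by simp_all

    have F1: "T i \<omega> = Ti (Part \<omega>) (Z \<omega>)" "T0 i \<omega> = T0i (Part \<omega>) (Z \<omega>)"
      "(\<lambda>k\<in>?I. (T k \<omega>, T0 k \<omega>)) = tt (Part \<omega>) (Z \<omega>)" if w: "\<omega> \<in> space M" for \<omega>
    proof -
      have p: "Part \<omega> \<in> VP" by (rule PartVP[OF w])
      have s: "fst (Part \<omega> i) \<subseteq> {..<nx i}" "snd (Part \<omega> i) \<subseteq> {..<ny i}" using VPsub[OF p i] by auto
      show "T i \<omega> = Ti (Part \<omega>) (Z \<omega>)" unfolding T_def Ti_def Z_def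
        by (rule T_stat_cong(1)[OF s]) (simp_all add: X_def Y_def)
      show "T0 i \<omega> = T0i (Part \<omega>) (Z \<omega>)" unfolding T0_def T0i_def Z_def
        by (rule T_stat_cong(2)[OF s]) (simp_all add: X_def Y_def)
      show "(\<lambda>k\<in>?I. (T k \<omega>, T0 k \<omega>)) = tt (Part \<omega>) (Z \<omega>)" unfolding tt_def Z_def fst_conv
      proof (rule restrict_ext)
        fix k assume k: "k \<in> ?I"
        then have km: "k < m" by simp
        have sk: "fst (Part \<omega> k) \<subseteq> {..<nx k}" "snd (Part \<omega> k) \<subseteq> {..<ny k}" using VPsub[OF p km] by auto
        have Kk: "fst (Kminus i \<omega> k) = (\<lambda>j\<in>{..<nx k}. X k j \<omega>)" "snd (Kminus i \<omega> k) = (\<lambda>j\<in>{..<ny k}. Y k j \<omega>)"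
          using k unfolding K_def by simp_all
        have e1: "T k \<omega> = T_stat (nx k) (ny k) (fst (Part \<omega> k)) (snd (Part \<omega> k)) (fst (Kminus i \<omega> k)) (snd (Kminus i \<omega> k))"
          unfolding T_def by (rule T_stat_cong(1)[OF sk]) (simp_all add: Kk)
        have e2: "T0 k \<omega> = T0_stat (nx k) (ny k) (fst (Part \<omega> k)) (snd (Part \<omega> k)) (fst (Kminus i \<omega> k)) (snd (Kminus i \<omega> k))"
          unfolding T0_def by (rule T_stat_cong(2)[OF sk]) (simp_all add: Kk)
        show "(T k \<omega>, T0 k \<omega>) = (T_stat (nx k) (ny k) (fst (Part \<omega> k)) (snd (Part \<omega> k)) (fst (Kminus i \<omega> k)) (snd (Kminus i \<omega> k)),
              T0_stat (nx k) (ny k) (fst (Part \<omega> k)) (snd (Part \<omega> k)) (fst (Kminus i \<omega> k)) (snd (Kminus i \<omega> k)))"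
          using e1 e2 by simp
      qed
    qed

    have F4: "phi p z \<in> space ?O" "Ti p (phi p z) = T0i p z" "T0i p (phi p z) = Ti p z" "tt p (phi p z) = tt p z"
      if p: "p \<in> VP" and z: "z \<in> space ?O" for p z
    proof -
      obtain \<kappa> a b where zz: "z = (\<kappa>, (a, b))" by (cases z) auto
      have sp: "\<kappa> \<in> space ?KS" "a \<in> space ?AX" "b \<in> space ?AY" using z unfolding zz by (simp_all add: space_pair_measure)
      have fa: "flipv {..<nx i} ({..<nx i} - fst (p i)) a \<in> space ?AX" by (rule measurable_space[OF flipv_meas_borel sp(2)])
      have fb: "flipv {..<ny i} ({..<ny i} - snd (p i)) b \<in> space ?AY" by (rule measurable_space[OF flipv_meas_borel sp(3)])
      show "phi p z \<in> space ?O" unfolding phi_def zz using sp(1) fa fb by (simp add: space_pair_measure)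
      have s: "fst (p i) \<subseteq> {..<nx i}" "snd (p i) \<subseteq> {..<ny i}" using VPsub[OF p i] by auto
      have cx: "card (fst (p i)) \<noteq> 0" "card ({..<nx i} - fst (p i)) \<noteq> 0"
        using card_half[OF _ s(1) VPcard(1)[OF p i]] nx_ge i by auto
      have cy: "card (snd (p i)) \<noteq> 0" "card ({..<ny i} - snd (p i)) \<noteq> 0"
        using card_half[OF _ s(2) VPcard(2)[OF p i]] ny_ge i by auto
      show "Ti p (phi p z) = T0i p z" unfolding Ti_def T0i_def phi_def zz fst_conv snd_conv
        by (rule T_stat_flip(1)[OF s cx cy, where c="2 * muy i"]) (use s in \<open>auto simp: flipv_def null\<close>)
      show "T0i p (phi p z) = Ti p z" unfolding Ti_def T0i_def phi_def zz fst_conv snd_conv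
        by (rule T_stat_flip(2)[OF s cx cy, where c="2 * muy i"]) (use s in \<open>auto simp: flipv_def null\<close>)
      show "tt p (phi p z) = tt p z" unfolding tt_def phi_def zz by simp
    qed
    have cm0: "(\<lambda>z. c + fst (snd z) j) \<in> borel_measurable ?O" if "j < nx i" for j c
    proof -
      have "(\<lambda>z. fst (snd z)) \<in> ?O \<rightarrow>\<^sub>M ?AX" by (rule measurable_compose[OF measurable_snd measurable_fst])
      then show ?thesis using comp_meas_pi[of j "{..<nx i}" "\<lambda>z. fst (snd z)" ?O c] that by simp
    qed
    have cm0': "(\<lambda>z. c + snd (snd z) j) \<in> borel_measurable ?O" if "j < ny i" for j c
    proof -
      have "(\<lambda>z. snd (snd z)) \<in> ?O \<rightarrow>\<^sub>M ?AY" by (rule measurable_compose[OF measurable_snd measurable_snd])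
      then show ?thesis using comp_meas_pi[of j "{..<ny i}" "\<lambda>z. snd (snd z)" ?O c] that by simp
    qed
    have cm1: "(\<lambda>z. fst (fst z k) j) \<in> borel_measurable ?O" if "k \<in> ?I" "j < nx k" for k j
    proof -
      have "(\<lambda>z. fst z k) \<in> ?O \<rightarrow>\<^sub>M group_space nx ny k"
        by (rule measurable_compose[OF measurable_fst measurable_component_singleton[OF that(1)]])
      then have "(\<lambda>z. fst (fst z k)) \<in> ?O \<rightarrow>\<^sub>M PiM {..<nx k} (\<lambda>_. borel)"
        unfolding group_space_def by (rule measurable_compose[OF _ measurable_fst])
      then show ?thesis using comp_meas_pi[of j "{..<nx k}" "\<lambda>z. fst (fst z k)" ?O 0] that(2) by simp
    qed
    have cm2: "(\<lambda>z. snd (fst z k) j) \<in> borel_measurable ?O" if "k \<in> ?I" "j < ny k" for k j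
    proof -
      have "(\<lambda>z. fst z k) \<in> ?O \<rightarrow>\<^sub>M group_space nx ny k"
        by (rule measurable_compose[OF measurable_fst measurable_component_singleton[OF that(1)]])
      then have "(\<lambda>z. snd (fst z k)) \<in> ?O \<rightarrow>\<^sub>M PiM {..<ny k} (\<lambda>_. borel)"
        unfolding group_space_def by (rule measurable_compose[OF _ measurable_snd])
      then show ?thesis using comp_meas_pi[of j "{..<ny k}" "\<lambda>z. snd (fst z k)" ?O 0] that(2) by simp
    qed
    have Tim: "(\<lambda>z. Ti p z) \<in> borel_measurable ?O" "(\<lambda>z. T0i p z) \<in> borel_measurable ?O" if p: "p \<in> VP" for p
    proof -
      have s: "fst (p i) \<subseteq> {..<nx i}" "snd (p i) \<subseteq> {..<ny i}" using VPsub[OF p i] by auto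
      show "(\<lambda>z. Ti p z) \<in> borel_measurable ?O" unfolding Ti_def
        by (rule T_stat_meas(1)[where x="\<lambda>z j. mux i + fst (snd z) j" and y="\<lambda>z j. muy i + snd (snd z) j", OF s cm0 cm0'])
      show "(\<lambda>z. T0i p z) \<in> borel_measurable ?O" unfolding T0i_def
        by (rule T_stat_meas(2)[where x="\<lambda>z j. mux i + fst (snd z) j" and y="\<lambda>z j. muy i + snd (snd z) j", OF s cm0 cm0'])
    qed
    have ttm: "tt p \<in> ?O \<rightarrow>\<^sub>M PiM ?I (\<lambda>_. borel)" if p: "p \<in> VP" for p
      unfolding tt_def
    proof (rule measurable_restrict)
      fix k assume k: "k \<in> ?I"
      then have km: "k < m" by simp
      have s: "fst (p k) \<subseteq> {..<nx k}" "snd (p k) \<subseteq> {..<ny k}" using VPsub[OF p km] by auto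
      have a: "(\<lambda>z. T_stat (nx k) (ny k) (fst (p k)) (snd (p k)) (fst (fst z k)) (snd (fst z k))) \<in> borel_measurable ?O"
        by (rule T_stat_meas(1)[where x="\<lambda>z. fst (fst z k)" and y="\<lambda>z. snd (fst z k)", OF s cm1[OF k] cm2[OF k]])
      have b: "(\<lambda>z. T0_stat (nx k) (ny k) (fst (p k)) (snd (p k)) (fst (fst z k)) (snd (fst z k))) \<in> borel_measurable ?O"
        by (rule T_stat_meas(2)[where x="\<lambda>z. fst (fst z k)" and y="\<lambda>z. snd (fst z k)", OF s cm1[OF k] cm2[OF k]])
      show "(\<lambda>z. (T_stat (nx k) (ny k) (fst (p k)) (snd (p k)) (fst (fst z k)) (snd (fst z k)),
                 T0_stat (nx k) (ny k) (fst (p k)) (snd (p k)) (fst (fst z k)) (snd (fst z k)))) \<in> borel_measurable ?O"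
        by (rule borel_measurable_Pair[OF a b])
    qed
    have GS: "G p \<in> sets ?O" "G' p \<in> sets ?O" if p: "p \<in> VP" for p
    proof -
      have m1: "(\<lambda>z. (Ti p z, T0i p z)) \<in> borel_measurable ?O" by (rule borel_measurable_Pair[OF Tim[OF p]])
      have m2: "(\<lambda>z. (T0i p z, Ti p z)) \<in> borel_measurable ?O" by (rule borel_measurable_Pair[OF Tim(2)[OF p] Tim(1)[OF p]])
      have s1: "(\<lambda>z. (Ti p z, T0i p z)) -` A \<inter> space ?O \<in> sets ?O" by (rule measurable_sets[OF m1 A])
      have s2: "(\<lambda>z. (T0i p z, Ti p z)) -` A \<inter> space ?O \<in> sets ?O" by (rule measurable_sets[OF m2 A])
      have s3: "tt p -` B \<inter> space ?O \<in> sets ?O" by (rule measurable_sets[OF ttm[OF p] B])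
      have "G p = ((\<lambda>z. (Ti p z, T0i p z)) -` A \<inter> space ?O) \<inter> (tt p -` B \<inter> space ?O)"
        unfolding G_def by blast
      then show "G p \<in> sets ?O" using s1 s3 by simp
      have "G' p = ((\<lambda>z. (T0i p z, Ti p z)) -` A \<inter> space ?O) \<inter> (tt p -` B \<inter> space ?O)"
        unfolding G'_def by blast
      then show "G' p \<in> sets ?O" using s2 s3 by simp
    qed
    have wk: "(\<lambda>w. w k) \<in> ?WS \<rightarrow>\<^sub>M PiM {..<nx k} (\<lambda>_. borel :: real measure) \<Otimes>\<^sub>M PiM {..<ny k} (\<lambda>_. borel :: real measure)"
      if "k < m" for k
      using measurable_component_singleton[of k "{..<m}"] that by simp
    have hm: "h \<in> ?WS \<rightarrow>\<^sub>M ?O"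
      unfolding h_def
    proof (rule measurable_Pair)
      show "(\<lambda>w. \<lambda>k\<in>?I. ((\<lambda>j\<in>{..<nx k}. mux k + fst (w k) j), (\<lambda>j\<in>{..<ny k}. muy k + snd (w k) j))) \<in> ?WS \<rightarrow>\<^sub>M ?KS"
      proof (rule measurable_restrict)
        fix k assume k: "k \<in> ?I"
        then have km: "k < m" by simp
        have f1: "(\<lambda>w. fst (w k)) \<in> ?WS \<rightarrow>\<^sub>M PiM {..<nx k} (\<lambda>_. borel)"
          by (rule measurable_compose[OF wk[OF km] measurable_fst])
        have f2: "(\<lambda>w. snd (w k)) \<in> ?WS \<rightarrow>\<^sub>M PiM {..<ny k} (\<lambda>_. borel)"
          by (rule measurable_compose[OF wk[OF km] measurable_snd])
        show "(\<lambda>w. ((\<lambda>j\<in>{..<nx k}. mux k + fst (w k) j), (\<lambda>j\<in>{..<ny k}. muy k + snd (w k) j))) \<in> ?WS \<rightarrow>\<^sub>M group_space nx ny k"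
          unfolding group_space_def
        proof (rule measurable_Pair)
          show "(\<lambda>w. \<lambda>j\<in>{..<nx k}. mux k + fst (w k) j) \<in> ?WS \<rightarrow>\<^sub>M PiM {..<nx k} (\<lambda>_. borel)"
            by (rule measurable_restrict) (rule comp_meas_pi[OF _ f1])
          show "(\<lambda>w. \<lambda>j\<in>{..<ny k}. muy k + snd (w k) j) \<in> ?WS \<rightarrow>\<^sub>M PiM {..<ny k} (\<lambda>_. borel)"
            by (rule measurable_restrict) (rule comp_meas_pi[OF _ f2])
        qed
      qed
      show "(\<lambda>w. (fst (w i), snd (w i))) \<in> ?WS \<rightarrow>\<^sub>M ?AX \<Otimes>\<^sub>M ?AY"
        by (rule measurable_Pair[OF measurable_compose[OF wk[OF i] measurable_fst] measurable_compose[OF wk[OF i] measurable_snd]])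
    qed
    have Wsp: "W \<omega> \<in> space ?WS" for \<omega>
      unfolding W_def by (simp add: space_PiM space_pair_measure restrict_PiE_iff mem_Times_iff)
    have ZW: "Z \<omega> = h (W \<omega>)" for \<omega>
    proof -
      have "Kminus i \<omega> = fst (h (W \<omega>))"
        unfolding h_def W_def K_def X_def Y_def fst_conv
      proof (rule restrict_ext)
        fix k assume k: "k \<in> ?I"
        then have km: "k < m" by simp
        show "((\<lambda>j\<in>{..<nx k}. mux k + ex k j \<omega>), (\<lambda>j\<in>{..<ny k}. muy k + ey k j \<omega>))
          = ((\<lambda>j\<in>{..<nx k}. mux k + fst ((\<lambda>k\<in>{..<m}. ((\<lambda>j\<in>{..<nx k}. ex k j \<omega>), (\<lambda>j\<in>{..<ny k}. ey k j \<omega>))) k) j),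
             (\<lambda>j\<in>{..<ny k}. muy k + snd ((\<lambda>k\<in>{..<m}. ((\<lambda>j\<in>{..<nx k}. ex k j \<omega>), (\<lambda>j\<in>{..<ny k}. ey k j \<omega>))) k) j))"
          using km by (simp add: fun_eq_iff restrict_def)
      qed
      moreover have "snd (Z \<omega>) = snd (h (W \<omega>))" unfolding Z_def h_def W_def using i by simp
      ultimately show ?thesis unfolding Z_def by (simp add: prod_eq_iff)
    qed
    have indep: "measure M {\<omega> \<in> space M. Part \<omega> = p \<and> Z \<omega> \<in> H}
        = measure M {\<omega> \<in> space M. Part \<omega> = p} * measure M {\<omega> \<in> space M. Z \<omega> \<in> H}"
      if H: "H \<in> sets ?O" for p H
    proof -
      define E where "E = h -` H \<inter> space ?WS"
      have E: "E \<in> sets ?WS" unfolding E_def by (rule measurable_sets[OF hm H])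
      have pi: "measure M {\<omega> \<in> space M. Part \<omega> = p \<and> W \<omega> \<in> E}
          = measure M {\<omega> \<in> space M. Part \<omega> = p} * measure M {\<omega> \<in> space M. W \<omega> \<in> E}"
        unfolding W_def by (rule part_indep[rule_format, OF E])
      have s1: "{\<omega> \<in> space M. Part \<omega> = p \<and> W \<omega> \<in> E} = {\<omega> \<in> space M. Part \<omega> = p \<and> Z \<omega> \<in> H}"
        unfolding E_def using Wsp ZW by auto
      have s2: "{\<omega> \<in> space M. W \<omega> \<in> E} = {\<omega> \<in> space M. Z \<omega> \<in> H}"
        unfolding E_def using Wsp ZW by auto
      show ?thesis using pi unfolding s1 s2 .
    qed

    have F5: "measure M {\<omega> \<in> space M. Z \<omega> \<in> G' p} = measure M {\<omega> \<in> space M. Z \<omega> \<in> G p}" if p: "p \<in> VP" for p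
    proof -
      have FI0: "distr M ?O (\<lambda>\<omega>. (Kminus i \<omega>, (flipv {..<nx i} ({..<nx i} - fst (p i)) (\<lambda>j\<in>{..<nx i}. ex i j \<omega>),
                                                  flipv {..<ny i} ({..<ny i} - snd (p i)) (\<lambda>j\<in>{..<ny i}. ey i j \<omega>))))
           = distr M ?O (\<lambda>\<omega>. (Kminus i \<omega>, ((\<lambda>j\<in>{..<nx i}. ex i j \<omega>), (\<lambda>j\<in>{..<ny i}. ey i j \<omega>))))"
        by (rule flip_invariance[OF prob Km exm eym fxm fym symx symy eqC])
      have FI: "distr M ?O (\<lambda>\<omega>. phi p (Z \<omega>)) = distr M ?O Z"
        using FI0 unfolding phi_def Z_def by simp
      have PZm: "(\<lambda>\<omega>. phi p (Z \<omega>)) \<in> M \<rightarrow>\<^sub>M ?O"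
        unfolding phi_def Z_def fst_conv snd_conv
        by (intro measurable_Pair Km measurable_compose[OF exm flipv_meas_borel] measurable_compose[OF eym flipv_meas_borel])
      have sG: "G p \<in> sets ?O" by (rule GS(1)[OF p])
      have "{\<omega> \<in> space M. Z \<omega> \<in> G' p} = (\<lambda>\<omega>. phi p (Z \<omega>)) -` G p \<inter> space M"
      proof (rule set_eqI)
        fix \<omega>
        show "\<omega> \<in> {\<omega> \<in> space M. Z \<omega> \<in> G' p} \<longleftrightarrow> \<omega> \<in> (\<lambda>\<omega>. phi p (Z \<omega>)) -` G p \<inter> space M"
        proof (cases "\<omega> \<in> space M")
          case True
          note z = Zsp[OF True]
          show ?thesis using True z F4[OF p z] unfolding G_def G'_def by simp
        qed simp
      qed
      then have "measure M {\<omega> \<in> space M. Z \<omega> \<in> G' p} = measure (distr M ?O (\<lambda>\<omega>. phi p (Z \<omega>))) (G p)"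
        by (simp add: measure_distr[OF PZm sG])
      also have "\<dots> = measure (distr M ?O Z) (G p)" by (simp add: FI)
      also have "\<dots> = measure M (Z -` G p \<inter> space M)" by (rule measure_distr[OF Zm sG])
      also have "Z -` G p \<inter> space M = {\<omega> \<in> space M. Z \<omega> \<in> G p}" by blast
      finally show ?thesis .
    qed

    have L: "{\<omega> \<in> space M. (T i \<omega>, T0 i \<omega>) \<in> A \<and> (\<lambda>k\<in>?I. (T k \<omega>, T0 k \<omega>)) \<in> B} = {\<omega> \<in> space M. Z \<omega> \<in> G (Part \<omega>)}"
      using F1 Zsp unfolding G_def by auto
    have R: "{\<omega> \<in> space M. (T0 i \<omega>, T i \<omega>) \<in> A \<and> (\<lambda>k\<in>?I. (T k \<omega>, T0 k \<omega>)) \<in> B} = {\<omega> \<in> space M. Z \<omega> \<in> G' (Part \<omega>)}"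
      using F1 Zsp unfolding G'_def by auto
    have msG: "{\<omega> \<in> space M. Part \<omega> = p \<and> Z \<omega> \<in> G p} \<in> sets M" "{\<omega> \<in> space M. Part \<omega> = p \<and> Z \<omega> \<in> G' p} \<in> sets M"
      if p: "p \<in> VP" for p
    proof -
      have a: "{\<omega> \<in> space M. Part \<omega> = p} \<in> sets M" using part_meas by blast
      have b: "Z -` G p \<inter> space M \<in> sets M" by (rule measurable_sets[OF Zm GS(1)[OF p]])
      have c: "Z -` G' p \<inter> space M \<in> sets M" by (rule measurable_sets[OF Zm GS(2)[OF p]])
      have "{\<omega> \<in> space M. Part \<omega> = p \<and> Z \<omega> \<in> G p} = {\<omega> \<in> space M. Part \<omega> = p} \<inter> (Z -` G p \<inter> space M)" by blast
      then show "{\<omega> \<in> space M. Part \<omega> = p \<and> Z \<omega> \<in> G p} \<in> sets M" using a b by simp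
      have "{\<omega> \<in> space M. Part \<omega> = p \<and> Z \<omega> \<in> G' p} = {\<omega> \<in> space M. Part \<omega> = p} \<inter> (Z -` G' p \<inter> space M)" by blast
      then show "{\<omega> \<in> space M. Part \<omega> = p \<and> Z \<omega> \<in> G' p} \<in> sets M" using a c by simp
    qed
    have finVP: "finite VP" unfolding VP_def by (rule finite_VP)
    have "measure M {\<omega> \<in> space M. Z \<omega> \<in> G (Part \<omega>)} = (\<Sum>p\<in>VP. measure M {\<omega> \<in> space M. Part \<omega> = p \<and> Z \<omega> \<in> G p})"
      by (rule measure_split_finite[OF prob finVP PartVP msG(1)])
    also have "\<dots> = (\<Sum>p\<in>VP. measure M {\<omega> \<in> space M. Part \<omega> = p \<and> Z \<omega> \<in> G' p})"
    proof (rule sum.cong[OF refl])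
      fix p assume p: "p \<in> VP"
      show "measure M {\<omega> \<in> space M. Part \<omega> = p \<and> Z \<omega> \<in> G p} = measure M {\<omega> \<in> space M. Part \<omega> = p \<and> Z \<omega> \<in> G' p}"
        by (simp add: indep[OF GS(1)[OF p]] indep[OF GS(2)[OF p]] F5[OF p])
    qed
    also have "\<dots> = measure M {\<omega> \<in> space M. Z \<omega> \<in> G' (Part \<omega>)}"
      by (rule measure_split_finite[OF prob finVP PartVP msG(2), symmetric])
    finally have main: "measure M {\<omega> \<in> space M. Z \<omega> \<in> G (Part \<omega>)} = measure M {\<omega> \<in> space M. Z \<omega> \<in> G' (Part \<omega>)}" .
    show "measure M {\<omega> \<in> space M. (T i \<omega>, T0 i \<omega>) \<in> A \<and> (\<lambda>k\<in>{..<m} - {i}. (T k \<omega>, T0 k \<omega>)) \<in> B}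
      = measure M {\<omega> \<in> space M. (T0 i \<omega>, T i \<omega>) \<in> A \<and> (\<lambda>k\<in>{..<m} - {i}. (T k \<omega>, T0 k \<omega>)) \<in> B}"
      unfolding L R by (rule main)
  qed
qed

end
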